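(* Let $a,b>0$ and $2\le k<m\le n-1$ be integers with $a^m\neq b^k$. Let $x_1,\dots,x_n$ and $y_1,\dots,y_n$ be positive real numbers such that $$x_I+y_I=2a\quad\text{and}\quad x_J+y_J=2b$$ whenever $I,J\subset\{1,\dots,n\}$, $|I|=k$ and $|J|=m$. Then there is a constant $c>0$ such that $x_\iota/y_\iota=c$ for $\iota=1,\dots,n$.
   Context: For real numbers $x_1,\dots,x_n$ and $I\subset\{1,\dots,n\}$, $x_I:=\prod_{\iota\in I}x_\iota$ (with $x_\emptyset=1$); $|I|$ is the cardinality of $I$. *)

theory Defs
  imports Main "HOL-Analysis.Analysis"
begin

definition multi_prod :: "(nat \<Rightarrow> real) \<Rightarrow> nat set \<Rightarrow> real" where
  "multi_prod x I = (\<Prod>i\<in>I. x i)"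

end

theory Submission
  imports Defs
begin

lemma mp_insert: "finite A \<Longrightarrow> i \<notin> A \<Longrightarrow> multi_prod f (insert i A) = f i * multi_prod f A"
  by (simp add: multi_prod_def)

lemma alg1:
  fixes X P c xp yp xq yq :: real
  assumes "X = c ^ K * P" "xp = c * yp" "xq = c * yq" "xp * X + yp * P = xq * X + yq * P" "P > 0" "c > 0"
  shows "yp = yq"
proof -
  have "(c * c ^ K + 1) * P * (yp - yq) = (xp * X + yp * P) - (xq * X + yq * P)"
    unfolding assms(1-3) by (simp add: algebra_simps)
  also have "\<dots> = 0" using assms(4) by simp
  finally have "(c * c ^ K + 1) * P * (yp - yq) = 0" .
  moreover have "c * c ^ K + 1 > 0" using assms(6) by (simp add: add_pos_pos)
  ultimately show ?thesis using assms(5) by simp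
qed

locale setting =
  fixes a b :: int and k m n :: nat and x y :: "nat \<Rightarrow> real"
  assumes apos: "a > 0" and bpos: "b > 0"
    and k2: "2 \<le> k" and km: "k < m" and mn: "m \<le> n - 1"
    and abne: "a ^ m \<noteq> b ^ k"
    and xpos: "\<forall>i\<in>{1..n}. x i > 0" and ypos: "\<forall>i\<in>{1..n}. y i > 0"
    and hk: "\<forall>I. I \<subseteq> {1..n} \<and> card I = k \<longrightarrow> multi_prod x I + multi_prod y I = 2 * a"
    and hm: "\<forall>J. J \<subseteq> {1..n} \<and> card J = m \<longrightarrow> multi_prod x J + multi_prod y J = 2 * b"
begin

lemma n_big: "k + 2 \<le> n" "m + 1 \<le> n" "4 \<le> n"
  using k2 km mn by auto

lemma px_pos: "A \<subseteq> {1..n} \<Longrightarrow> multi_prod x A > 0"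
  unfolding multi_prod_def using xpos by (intro prod_pos) auto

lemma py_pos: "A \<subseteq> {1..n} \<Longrightarrow> multi_prod y A > 0"
  unfolding multi_prod_def using ypos by (intro prod_pos) auto

lemma card_minus: "D \<subseteq> {1..n} \<Longrightarrow> card ({1..n} - D) = n - card D"
  by (subst card_Diff_subset) (auto intro: finite_subset)

lemma subset_ex: "d \<le> card A \<Longrightarrow> \<exists>S. S \<subseteq> A \<and> card S = d"
  by (metis obtain_subset_with_card_n)

lemma avoid_ex:
  assumes "D \<subseteq> {1..n}" "d + card D \<le> n"
  shows "\<exists>S. S \<subseteq> {1..n} - D \<and> card S = d"
proof -
  have "card ({1..n} - D) = n - card D" using card_minus[OF assms(1)] .
  then have "d \<le> card ({1..n} - D)" using assms(2) by linarith
  then show ?thesis using subset_ex by blast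
qed

lemma swap:
  assumes "i \<in> {1..n}" "j \<in> {1..n}" "S \<subseteq> {1..n} - {i,j}" "card S = k - 1"
  shows "x i * multi_prod x S + y i * multi_prod y S = x j * multi_prod x S + y j * multi_prod y S"
proof -
  have fS: "finite S" using assms(3) finite_subset by blast
  have "i \<notin> S" "j \<notin> S" using assms(3) by auto
  have ci: "card (insert i S) = k" using fS \<open>i \<notin> S\<close> assms(4) k2 by simp
  have cj: "card (insert j S) = k" using fS \<open>j \<notin> S\<close> assms(4) k2 by simp
  have "insert i S \<subseteq> {1..n}" "insert j S \<subseteq> {1..n}" using assms by auto
  then have "multi_prod x (insert i S) + multi_prod y (insert i S) = 2 * a"
    "multi_prod x (insert j S) + multi_prod y (insert j S) = 2 * a"
    using hk ci cj by auto
  then show ?thesis using mp_insert[OF fS \<open>i \<notin> S\<close>] mp_insert[OF fS \<open>j \<notin> S\<close>] by simp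
qed

lemma x_eq_y_eq:
  assumes "i \<in> {1..n}" "j \<in> {1..n}" "i \<noteq> j" "x i = x j"
  shows "y i = y j"
proof -
  have "card {i,j} = 2" using assms by simp
  then have "k - 1 + card {i,j} \<le> n" using n_big by linarith
  then obtain S where S: "S \<subseteq> {1..n} - {i,j}" "card S = k - 1"
    using avoid_ex[of "{i,j}" "k-1"] assms by blast
  have "multi_prod y S > 0" using py_pos S by auto
  with swap[OF assms(1,2) S] assms(4) show ?thesis by simp
qed

lemma L:
  assumes "i \<in> {1..n}" "j \<in> {1..n}" "i \<noteq> j" "x i / y i \<noteq> x j / y j"
    and "p \<in> {1..n}" "q \<in> {1..n}" "p \<notin> {i,j}" "q \<notin> {i,j}" "p \<noteq> q"
  shows "x p / y p = x q / y q"
proof -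
  have d: "x i - x j \<noteq> 0" using x_eq_y_eq[OF assms(1-3)] assms(4) by auto
  have "card {i,j,p,q} = 4" using assms by simp
  then have "k - 2 + card {i,j,p,q} \<le> n" using n_big by linarith
  then obtain T where T: "T \<subseteq> {1..n} - {i,j,p,q}" "card T = k - 2"
    using avoid_ex[of "{i,j,p,q}" "k-2"] assms by blast
  have fT: "finite T" using T(1) finite_subset by blast
  have "p \<notin> T" "q \<notin> T" using T by auto
  have Sp: "insert p T \<subseteq> {1..n} - {i,j}" "card (insert p T) = k - 1"
    using T assms fT \<open>p \<notin> T\<close> k2 by auto
  have Sq: "insert q T \<subseteq> {1..n} - {i,j}" "card (insert q T) = k - 1"
    using T assms fT \<open>q \<notin> T\<close> k2 by auto
  have e1: "x p * multi_prod x T * (x i - x j) = y p * multi_prod y T * (y j - y i)"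
    using swap[OF assms(1,2) Sp] mp_insert[OF fT \<open>p \<notin> T\<close>] by (simp add: algebra_simps)
  have e2: "x q * multi_prod x T * (x i - x j) = y q * multi_prod y T * (y j - y i)"
    using swap[OF assms(1,2) Sq] mp_insert[OF fT \<open>q \<notin> T\<close>] by (simp add: algebra_simps)
  have "multi_prod x T > 0" using px_pos T by auto
  have "y p > 0" "y q > 0" using ypos assms by auto
  have "x p / y p = multi_prod y T * (y j - y i) / (multi_prod x T * (x i - x j))"
    using e1 d \<open>multi_prod x T > 0\<close> \<open>y p > 0\<close> by (simp add: field_simps)
  also have "\<dots> = x q / y q"
    using e2 d \<open>multi_prod x T > 0\<close> \<open>y q > 0\<close> by (simp add: field_simps)
  finally show ?thesis .
qed

lemma outlier:
  assumes "i \<in> {1..n}" "j \<in> {1..n}" "i \<noteq> j" "x i / y i \<noteq> x j / y j"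
  shows "\<exists>w\<in>{1..n}. \<exists>c. (\<forall>p\<in>{1..n} - {w}. x p / y p = c) \<and> x w / y w \<noteq> c"
proof -
  have "card {i,j} = 2" using assms by simp
  then have "1 + card {i,j} \<le> n" using n_big by linarith
  then obtain P where "P \<subseteq> {1..n} - {i,j}" "card P = 1"
    using avoid_ex[of "{i,j}" 1] assms by blast
  then obtain p where p: "p \<in> {1..n} - {i,j}" by (auto simp: card_Suc_eq)
  define c where "c = x p / y p"
  have allc: "\<forall>q\<in>{1..n} - {i,j}. x q / y q = c"
  proof
    fix q assume q: "q \<in> {1..n} - {i,j}"
    show "x q / y q = c"
    proof (cases "q = p")
      case False then show ?thesis using L[OF assms, of q p] p q c_def by auto
    qed (simp add: c_def)
  qed
  show ?thesis
  proof (cases "x i / y i = c")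
    case True
    then have "\<forall>q\<in>{1..n} - {j}. x q / y q = c" using allc by auto
    moreover have "x j / y j \<noteq> c" using True assms by auto
    ultimately show ?thesis using assms(2) by (intro bexI[of _ j] exI[of _ c] conjI)
  next
    case False
    have "card {i,j,p} = 3" using assms p by simp
    then have "1 + card {i,j,p} \<le> n" using n_big by linarith
    then obtain Q where "Q \<subseteq> {1..n} - {i,j,p}" "card Q = 1"
      using avoid_ex[of "{i,j,p}" 1] assms p by blast
    then obtain q where q: "q \<in> {1..n} - {i,j,p}" by (auto simp: card_Suc_eq)
    have "x i / y i \<noteq> x p / y p" using False c_def by simp
    from L[OF assms(1) _ _ this, of j q] p q assms
    have "x j / y j = x q / y q" by auto
    then have "x j / y j = c" using allc q by auto
    then have "\<forall>q\<in>{1..n} - {i}. x q / y q = c" using allc by auto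
    then show ?thesis using False assms(1) by (intro bexI[of _ i] exI[of _ c] conjI)
  qed
qed

lemma no_outlier:
  assumes w: "w \<in> {1..n}" and hc: "\<forall>p\<in>{1..n} - {w}. x p / y p = c"
  shows "x w / y w = c"
proof (rule ccontr)
  assume ne: "x w / y w \<noteq> c"
  let ?N = "{1..n} - {w}"
  have w1: "{w} \<subseteq> {1..n}" using w by simp
  have cN: "card ?N = n - 1" using card_minus[OF w1] by simp
  have "1 + card {w} \<le> n" using n_big by simp
  then obtain P where "P \<subseteq> ?N" "card P = 1"
    using avoid_ex[OF w1, of 1] by blast
  then obtain p0 where p0: "p0 \<in> ?N" by (auto simp: card_Suc_eq)
  have cpos: "c > 0" proof -
    have "x p0 > 0" "y p0 > 0" using p0 xpos ypos by auto
    moreover have "c = x p0 / y p0" using hc p0 by simp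
    ultimately show ?thesis by simp
  qed
  have hx: "\<forall>p\<in>?N. x p = c * y p" 
  proof
    fix p assume p: "p \<in> ?N"
    then have "y p > 0" using ypos by auto
    moreover have "x p / y p = c" using hc p by blast
    ultimately show "x p = c * y p" by (auto simp: field_simps)
  qed
  have prodc: "multi_prod x A = c ^ card A * multi_prod y A" if "A \<subseteq> ?N" for A
  proof -
    have "multi_prod x A = (\<Prod>i\<in>A. c * y i)" unfolding multi_prod_def
    proof (rule prod.cong)
      fix i assume "i \<in> A"
      then have "i \<in> ?N" using that by blast
      then show "x i = c * y i" using hx by simp
    qed simp
    also have "\<dots> = c ^ card A * multi_prod y A" by (simp add: prod.distrib multi_prod_def)
    finally show ?thesis .
  qed
  have yc: "y p = y q" if pq: "p \<in> ?N" "q \<in> ?N" "p \<noteq> q" for p q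
  proof -
    have "w \<noteq> p" "w \<noteq> q" using pq by auto
    then have c3: "card {w,p,q} = 3" using pq(3) by simp
    have sub3: "{w,p,q} \<subseteq> {1..n}" using pq w by auto
    have "k - 1 + card {w,p,q} \<le> n" using c3 n_big by linarith
    then obtain T where T: "T \<subseteq> {1..n} - {w,p,q}" "card T = k - 1"
      using avoid_ex[OF sub3, of "k-1"] by blast
    have T1: "T \<subseteq> {1..n} - {p,q}" using T by auto
    have "T \<subseteq> ?N" using T by auto
    have sw: "x p * multi_prod x T + y p * multi_prod y T = x q * multi_prod x T + y q * multi_prod y T"
    proof -
      have "p \<in> {1..n}" "q \<in> {1..n}" using pq by auto
      from swap[OF this T1 T(2)] show ?thesis .
    qed
    have hT: "multi_prod x T = c ^ (k-1) * multi_prod y T" using prodc[OF \<open>T \<subseteq> ?N\<close>] T(2) by simp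
    have "x p = c * y p" "x q = c * y q" using hx pq by auto
    moreover have "multi_prod y T > 0" using py_pos T by auto
    ultimately show ?thesis using alg1[OF hT _ _ sw _ cpos] by blast
  qed
  define t where "t = y p0"
  have tpos: "t > 0" using t_def p0 ypos by auto
  have yA: "multi_prod y A = t ^ card A" if "A \<subseteq> ?N" for A
  proof -
    have "multi_prod y A = (\<Prod>i\<in>A. t)" unfolding multi_prod_def
    proof (rule prod.cong)
      fix i assume "i \<in> A"
      then have "i \<in> ?N" using that by blast
      then show "y i = t" using yc[of i p0] p0 t_def by (cases "i = p0") auto
    qed simp
    then show ?thesis by simp
  qed
  have xA: "multi_prod x A = (c * t) ^ card A" if "A \<subseteq> ?N" for A
    using prodc[OF that] yA[OF that] by (simp add: power_mult_distrib)
  have eqs: "(c*t) ^ d + t ^ d = 2 * e \<and> x w * (c*t) ^ (d-1) + y w * t ^ (d-1) = 2 * e"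
    if d: "1 \<le> d" "d \<le> n - 1" "\<forall>I. I \<subseteq> {1..n} \<and> card I = d \<longrightarrow> multi_prod x I + multi_prod y I = 2 * e"
    for d and e :: real
  proof
    have "d \<le> card ?N" unfolding cN using d(2) .
    then obtain A where A: "A \<subseteq> ?N" "card A = d" using subset_ex by blast
    then have "A \<subseteq> {1..n}" by auto
    then show "(c*t) ^ d + t ^ d = 2 * e" using d(3) A xA yA by auto
    have "d - 1 \<le> card ?N" unfolding cN using d(2) by linarith
    then obtain B where B: "B \<subseteq> ?N" "card B = d - 1" using subset_ex by blast
    have fB: "finite B" using B finite_subset by blast
    have "w \<notin> B" using B by auto
    have "insert w B \<subseteq> {1..n}" "card (insert w B) = d" using B w fB \<open>w \<notin> B\<close> d by auto
    then have "multi_prod x (insert w B) + multi_prod y (insert w B) = 2 * e" using d(3) by auto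
    then show "x w * (c*t) ^ (d-1) + y w * t ^ (d-1) = 2 * e"
      using mp_insert[OF fB \<open>w \<notin> B\<close>] xA[OF B(1)] yA[OF B(1)] B by simp
  qed
  have Ek: "(c*t) ^ k + t ^ k = 2 * a \<and> x w * (c*t) ^ (k-1) + y w * t ^ (k-1) = 2 * a"
    using eqs[of k "real_of_int a"] hk k2 n_big by auto
  have Em: "(c*t) ^ m + t ^ m = 2 * b \<and> x w * (c*t) ^ (m-1) + y w * t ^ (m-1) = 2 * b"
    using eqs[of m "real_of_int b"] hm km mn by auto
  show False
  proof (cases "c = 1")
    case True
    then have "real_of_int a = t ^ k" "real_of_int b = t ^ m" using Ek Em by auto
    then have "real_of_int (a ^ m) = (t ^ k) ^ m" "real_of_int (b ^ k) = (t ^ m) ^ k"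
      by simp_all
    moreover have "(t ^ k) ^ m = (t ^ m) ^ k" by (metis power_mult mult.commute)
    ultimately have "real_of_int (a ^ m) = real_of_int (b ^ k)" by simp
    then show False using abne by (simp only: of_int_eq_iff)
  next
    case False
    define X where "X = c * t"
    define K where "K = k - 1"
    define D where "D = m - k"
    have XY: "X \<noteq> t" using False X_def tpos by auto
    have Xpos: "X > 0" using X_def cpos tpos by simp
    have kK: "k = Suc K" using K_def k2 by simp
    have mK: "m - 1 = K + D" "m = Suc (K + D)" using K_def D_def k2 km by auto
    have D0: "D > 0" using D_def km by simp
    have e1: "(x w - X) * X ^ K + (y w - t) * t ^ K = 0"
      using Ek unfolding kK X_def[symmetric] by (simp add: algebra_simps)
    have e2: "(x w - X) * X ^ K * X ^ D + (y w - t) * t ^ K * t ^ D = 0"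
      using Em unfolding mK X_def[symmetric] by (simp add: algebra_simps power_add)
    have "(x w - X) * X ^ K * (X ^ D - t ^ D) = 0"
    proof -
      have "(x w - X) * X ^ K * t ^ D + (y w - t) * t ^ K * t ^ D = 0"
      proof -
        have "((x w - X) * X ^ K + (y w - t) * t ^ K) * t ^ D = 0" using e1 by simp
        then show ?thesis by (simp add: algebra_simps)
      qed
      with e2 show ?thesis by (simp add: algebra_simps)
    qed
    moreover have "X ^ D \<noteq> t ^ D" using power_eq_iff_eq_base[OF D0, of X t] Xpos tpos XY by simp
    ultimately have u: "x w = X" using Xpos by simp
    with e1 have "y w = t" using tpos by simp
    with u have "x w / y w = c" using X_def tpos by simp
    with ne show False by simp
  qed
qed

end

theorem lemma4p1:
  fixes a b :: int and k m n :: nat and x y :: "nat \<Rightarrow> real"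
  assumes "a > 0" and "b > 0"
    and "2 \<le> k" and "k < m" and "m \<le> n - 1"
    and "a ^ m \<noteq> b ^ k"
    and "\<forall>i\<in>{1..n}. x i > 0" and "\<forall>i\<in>{1..n}. y i > 0"
    and "\<forall>I. I \<subseteq> {1..n} \<and> card I = k \<longrightarrow> multi_prod x I + multi_prod y I = 2 * a"
    and "\<forall>J. J \<subseteq> {1..n} \<and> card J = m \<longrightarrow> multi_prod x J + multi_prod y J = 2 * b"
  shows "\<exists>c::real. c > 0 \<and> (\<forall>i\<in>{1..n}. x i / y i = c)"
proof -
  interpret setting a b k m n x y using assms by unfold_locales
  have "1 \<in> {1..n}" using n_big by simp
  show ?thesis
  proof (cases "\<exists>i\<in>{1..n}. \<exists>j\<in>{1..n}. i \<noteq> j \<and> x i / y i \<noteq> x j / y j")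
    case True
    then obtain i j where "i \<in> {1..n}" "j \<in> {1..n}" "i \<noteq> j" "x i / y i \<noteq> x j / y j" by blast
    from outlier[OF this] obtain w c where w: "w \<in> {1..n}" "\<forall>p\<in>{1..n} - {w}. x p / y p = c" "x w / y w \<noteq> c"
      by blast
    have "x w / y w = c" by (rule no_outlier[OF w(1) w(2)])
    with w(3) show ?thesis by simp
  next
    case False
    have "\<forall>i\<in>{1..n}. x i / y i = x 1 / y 1"
    proof
      fix i assume i: "i \<in> {1..n}"
      show "x i / y i = x 1 / y 1"
      proof (cases "i = 1")
        case False
        then show ?thesis using \<open>\<not> (\<exists>i\<in>{1..n}. \<exists>j\<in>{1..n}. i \<noteq> j \<and> x i / y i \<noteq> x j / y j)\<close> i \<open>1 \<in> {1..n}\<close> by blast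
      qed simp
    qed
    moreover have "x 1 / y 1 > 0" using \<open>1 \<in> {1..n}\<close> assms(7,8) by simp
    ultimately show ?thesis by blast
  qed
qed

end
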